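(* The family $(P_i)_{i\ge1}$ is a basis of the space of primitive elements of ${\cal H}_{ladder}$.
   Context: ${\cal H}_R$ is the commutative polynomial algebra over $\mathbb{Q}$ on isomorphism classes of rooted trees (finite connected simply connected graphs with a root, edges oriented away from the root), a Hopf algebra with coproduct the algebra morphism $\Delta(t)=1\otimes t+t\otimes1+\sum_CP^C(t)\otimes R^C(t)$, the sum over admissible cuts $C$ (nonempty edge sets meeting each root-to-vertex path at most once; $R^C(t)$ = component containing the root, $P^C(t)$ = product of the others). A ladder is a rooted tree in which every vertex has at most one outgoing edge; $l_i$ is the ladder with $i$ vertices, and $\Delta(l_n)=1\otimes l_n+l_n\otimes1+\sum_{j=1}^{n-1}l_j\otimes l_{n-j}$. ${\cal H}_{ladder}$ is the Hopf subalgebra of ${\cal H}_R$ generated by the ladders; its primitive elements are the $x$ with $\Delta(x)=x\otimes1+1\otimes x$. For $n\ge1$ let $\Psi_n(X_1,\dots,X_n)=\sum_{a_1+2a_2+\cdots+na_n=n}\frac{X_1^{a_1}\cdots X_n^{a_n}}{a_1!\cdots a_n!}$. Define $P_1=l_1$ and $P_n=l_n-\Psi_n(P_1,\dots,P_{n-1},0)$ for $n\ge2$. *)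

theory Defs
  imports Complex_Main "HOL-Library.Poly_Mapping"
begin

type_synonym 'v qpoly = "('v \<Rightarrow>\<^sub>0 nat) \<Rightarrow>\<^sub>0 rat"

text \<open>H_ladder = Q[l_1, l_2, ...]; the variable with index i represents l_(i+1).\<close>
type_synonym hladder = "nat qpoly"

text \<open>H_ladder tensor H_ladder = Q[left copies, right copies]; Inl i is l_(i+1) tensor 1,
  Inr i is 1 tensor l_(i+1).\<close>
type_synonym hladder2 = "(nat + nat) qpoly"

definition qvar :: "'v \<Rightarrow> 'v qpoly" where
  "qvar v = Poly_Mapping.single (Poly_Mapping.single v 1) 1"

definition qconst :: "rat \<Rightarrow> 'v qpoly" where
  "qconst c = Poly_Mapping.single 0 c"

definition qsmult :: "rat \<Rightarrow> 'v qpoly \<Rightarrow> 'v qpoly" where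
  "qsmult c p = qconst c * p"

definition qeval :: "('v \<Rightarrow> 'w qpoly) \<Rightarrow> 'v qpoly \<Rightarrow> 'w qpoly" where
  "qeval f p = (\<Sum>m\<in>Poly_Mapping.keys p. qconst (Poly_Mapping.lookup p m) * (\<Prod>x\<in>Poly_Mapping.keys (m::'v \<Rightarrow>\<^sub>0 nat). f x ^ Poly_Mapping.lookup m x))"

definition ladder :: "nat \<Rightarrow> hladder" where
  "ladder n = qvar (n - 1)"

definition lt :: "nat \<Rightarrow> hladder2" where
  "lt j = (if j = 0 then 1 else qvar (Inl (j - 1)))"

definition rt :: "nat \<Rightarrow> hladder2" where
  "rt j = (if j = 0 then 1 else qvar (Inr (j - 1)))"

definition delta_ladder :: "nat \<Rightarrow> hladder2" where
  "delta_ladder n = rt n + lt n + (\<Sum>j=1..n-1. lt j * rt (n - j))"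

definition coprod :: "hladder \<Rightarrow> hladder2" where
  "coprod = qeval (\<lambda>i. delta_ladder (Suc i))"

definition tensor_left :: "hladder \<Rightarrow> hladder2" where
  "tensor_left = qeval (\<lambda>i. qvar (Inl i))"

definition tensor_right :: "hladder \<Rightarrow> hladder2" where
  "tensor_right = qeval (\<lambda>i. qvar (Inr i))"

definition primitive :: "hladder \<Rightarrow> bool" where
  "primitive x \<longleftrightarrow> coprod x = tensor_left x + tensor_right x"

definition psi_index :: "nat \<Rightarrow> (nat \<Rightarrow> nat) set" where
  "psi_index n = {a. (\<forall>k. a k \<noteq> 0 \<longrightarrow> k \<in> {1..n}) \<and> (\<Sum>k=1..n. k * a k) = n}"

definition Psi :: "nat \<Rightarrow> (nat \<Rightarrow> 'v qpoly) \<Rightarrow> 'v qpoly" where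
  "Psi n X = (\<Sum>a\<in>psi_index n.
      qconst (1 / of_nat (\<Prod>k=1..n. fact (a k))) * (\<Prod>k=1..n. X k ^ a k))"

text \<open>Plist n = [P_1, ..., P_n], with P_1 = l_1 and
  P_n = l_n - Psi_n(P_1, ..., P_(n-1), 0).\<close>
primrec Plist :: "nat \<Rightarrow> hladder list" where
  "Plist 0 = []"
| "Plist (Suc n) = Plist n @
     [if n = 0 then ladder 1
      else ladder (Suc n) - Psi (Suc n) (\<lambda>k. if 1 \<le> k \<and> k \<le> n then Plist n ! (k - 1) else 0)]"

definition Pel :: "nat \<Rightarrow> hladder" where
  "Pel n = Plist n ! (n - 1)"

end

theory Submission
  imports Defs "HOL-Computational_Algebra.Formal_Power_Series"
begin


lemma qconst_add: "qconst (a + b) = (qconst a + qconst b :: 'v qpoly)"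
  by (simp add: qconst_def single_add)
lemma qconst_mult: "qconst (a * b) = (qconst a * qconst b :: 'v qpoly)"
  by (simp add: qconst_def mult_single)
lemma qconst_0[simp]: "qconst 0 = 0" by (simp add: qconst_def)
lemma qconst_1[simp]: "qconst 1 = 1" by (simp add: qconst_def)
lemma qconst_of_nat: "qconst (of_nat n) = of_nat n"
  by (simp add: qconst_def)
lemma qconst_uminus: "qconst (- a) = - qconst a"
  by (simp add: qconst_def single_uminus)
lemma qconst_diff: "qconst (a - b) = qconst a - qconst b"
  by (simp add: qconst_def single_diff)

lemma qpoly_expansion: "p = (\<Sum>m\<in>Poly_Mapping.keys p. Poly_Mapping.single m (Poly_Mapping.lookup p m))"
proof (rule poly_mapping_eqI)
  fix k
  show "Poly_Mapping.lookup p k = Poly_Mapping.lookup (\<Sum>m\<in>Poly_Mapping.keys p. Poly_Mapping.single m (Poly_Mapping.lookup p m)) k"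
    by (cases "k \<in> Poly_Mapping.keys p")
       (auto simp: lookup_sum lookup_single when_def in_keys_iff)
qed

definition mon :: "('v \<Rightarrow> 'w qpoly) \<Rightarrow> ('v \<Rightarrow>\<^sub>0 nat) \<Rightarrow> 'w qpoly" where
  "mon f m = (\<Prod>x\<in>Poly_Mapping.keys m. f x ^ Poly_Mapping.lookup m x)"

lemma mon_superset: "finite S \<Longrightarrow> Poly_Mapping.keys m \<subseteq> S \<Longrightarrow>
   mon f m = (\<Prod>x\<in>S. f x ^ Poly_Mapping.lookup m x)"
  unfolding mon_def
  by (rule prod.mono_neutral_left) (auto simp: in_keys_iff)

lemma mon_add: "mon f (a + b) = mon f a * mon f b"
proof -
  let ?S = "Poly_Mapping.keys a \<union> Poly_Mapping.keys b"
  have "mon f (a+b) = (\<Prod>x\<in>?S. f x ^ Poly_Mapping.lookup (a+b) x)"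
    by (rule mon_superset) (simp_all add: keys_add)
  also have "\<dots> = (\<Prod>x\<in>?S. f x ^ Poly_Mapping.lookup a x) * (\<Prod>x\<in>?S. f x ^ Poly_Mapping.lookup b x)"
    by (simp add: lookup_add power_add prod.distrib)
  also have "\<dots> = mon f a * mon f b"
    using mon_superset[of ?S a f] mon_superset[of ?S b f] by simp
  finally show ?thesis .
qed

lemma mon_0[simp]: "mon f 0 = 1" by (simp add: mon_def)

lemma qeval_alt: "qeval f p = (\<Sum>m\<in>Poly_Mapping.keys p. qconst (Poly_Mapping.lookup p m) * mon f m)"
  by (simp add: qeval_def mon_def)

lemma qeval_superset: "finite S \<Longrightarrow> Poly_Mapping.keys p \<subseteq> S \<Longrightarrow>
   qeval f p = (\<Sum>m\<in>S. qconst (Poly_Mapping.lookup p m) * mon f m)"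
  unfolding qeval_alt
  by (rule sum.mono_neutral_left) (auto simp: in_keys_iff)

lemma qeval_single: "qeval f (Poly_Mapping.single m c) = qconst c * mon f m"
  by (simp add: qeval_alt)

lemma qeval_0[simp]: "qeval f 0 = 0" by (simp add: qeval_alt)

lemma qeval_add: "qeval f (p + q) = qeval f p + qeval f q"
proof -
  let ?S = "Poly_Mapping.keys p \<union> Poly_Mapping.keys q"
  have "qeval f (p+q) = (\<Sum>m\<in>?S. qconst (Poly_Mapping.lookup (p+q) m) * mon f m)"
    by (rule qeval_superset) (simp_all add: keys_add)
  also have "\<dots> = (\<Sum>m\<in>?S. qconst (Poly_Mapping.lookup p m) * mon f m) + (\<Sum>m\<in>?S. qconst (Poly_Mapping.lookup q m) * mon f m)"
    by (simp add: lookup_add qconst_add distrib_right sum.distrib)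
  also have "\<dots> = qeval f p + qeval f q"
    using qeval_superset[of ?S p f] qeval_superset[of ?S q f] by simp
  finally show ?thesis .
qed

lemma qeval_sum: "qeval f (\<Sum>i\<in>I. g i) = (\<Sum>i\<in>I. qeval f (g i))"
  by (induction I rule: infinite_finite_induct) (auto simp: qeval_add)

lemma qeval_uminus: "qeval f (- p) = - qeval f p"
  using qeval_add[of f p "-p"] by (simp add: eq_neg_iff_add_eq_0 add.commute)

lemma qeval_diff: "qeval f (p - q) = qeval f p - qeval f q"
  using qeval_add[of f p "-q"] by (simp add: qeval_uminus)

lemma qeval_mult: "qeval f (p * q) = qeval f p * qeval f q"
proof -
  have "p * q = (\<Sum>a\<in>Poly_Mapping.keys p. \<Sum>b\<in>Poly_Mapping.keys q.
      Poly_Mapping.single (a + b) (Poly_Mapping.lookup p a * Poly_Mapping.lookup q b))"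
    apply (subst qpoly_expansion[of p], subst qpoly_expansion[of q])
    apply (simp add: sum_distrib_left sum_distrib_right mult_single)
    by (rule sum.swap)
  then have "qeval f (p * q) = (\<Sum>a\<in>Poly_Mapping.keys p. \<Sum>b\<in>Poly_Mapping.keys q.
      (qconst (Poly_Mapping.lookup p a) * mon f a) * (qconst (Poly_Mapping.lookup q b) * mon f b))"
    by (simp add: qeval_sum qeval_single qconst_mult mon_add mult_ac)
  also have "\<dots> = qeval f p * qeval f q"
    apply (simp add: qeval_alt[of f p] qeval_alt[of f q] sum_distrib_left sum_distrib_right)
    by (rule sum.swap)
  finally show ?thesis .
qed

lemma qeval_qconst[simp]: "qeval f (qconst c) = qconst c"
  by (simp add: qconst_def qeval_single)

lemma qeval_1[simp]: "qeval f 1 = 1"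
  using qeval_qconst[of f 1] by simp

lemma qeval_qvar[simp]: "qeval f (qvar v) = f v"
  by (simp add: qvar_def qeval_single mon_def)

lemma qeval_pow: "qeval f (p ^ n) = qeval f p ^ n"
  by (induction n) (auto simp: qeval_mult)

lemma qeval_prod: "qeval f (\<Prod>i\<in>I. g i) = (\<Prod>i\<in>I. qeval f (g i))"
  by (induction I rule: infinite_finite_induct) (auto simp: qeval_mult)

lemma qeval_of_nat[simp]: "qeval f (of_nat n) = of_nat n"
  using qeval_qconst[of f "of_nat n"] by (simp add: qconst_of_nat)

lemma qeval_qsmult: "qeval f (qsmult c p) = qsmult c (qeval f p)"
  by (simp add: qsmult_def qeval_mult)

lemma qeval_mon: "qeval g (mon f m) = mon (\<lambda>x. qeval g (f x)) m"
  by (simp add: mon_def qeval_prod qeval_pow)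

lemma qeval_comp: "qeval g (qeval f p) = qeval (\<lambda>x. qeval g (f x)) p"
  by (simp add: qeval_alt[of f p] qeval_alt[of "\<lambda>x. qeval g (f x)" p] qeval_sum qeval_mult qeval_mon)

lemma qeval_cong: "(\<And>x m. m \<in> Poly_Mapping.keys p \<Longrightarrow> x \<in> Poly_Mapping.keys m \<Longrightarrow> f x = g x) \<Longrightarrow>
   qeval f p = qeval g p"
  unfolding qeval_alt mon_def
  by (intro sum.cong refl arg_cong2[where f="(*)"] prod.cong) auto

lemma single_pow: "Poly_Mapping.single a (1::rat) ^ k = Poly_Mapping.single (\<Sum>i<k. a) 1"
  by (induction k) (auto simp: mult_single algebra_simps)

lemma prod_single: "(\<Prod>x\<in>S. Poly_Mapping.single (g x) (1::rat)) = Poly_Mapping.single (\<Sum>x\<in>S. g x) 1"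
  by (induction S rule: infinite_finite_induct) (auto simp: mult_single)

lemma single_nat_mult: "(\<Sum>i<k. Poly_Mapping.single x (1::nat)) = Poly_Mapping.single x k"
  by (induction k) (auto simp: single_add[symmetric])

lemma mon_qvar: "mon qvar m = Poly_Mapping.single m 1"
proof -
  have "mon qvar m = (\<Prod>x\<in>Poly_Mapping.keys m. Poly_Mapping.single (\<Sum>i<Poly_Mapping.lookup m x. Poly_Mapping.single x 1) 1)"
    by (simp add: mon_def qvar_def single_pow)
  also have "\<dots> = Poly_Mapping.single m 1"
    apply (simp add: prod_single single_nat_mult[simplified])
    using qpoly_expansion[of m, symmetric] by simp
  finally show ?thesis .
qed

lemma qeval_id: "qeval qvar p = p"
  apply (simp add: qeval_alt mon_qvar qconst_def mult_single)
  using qpoly_expansion[of p, symmetric] by simp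



definition psiT :: "nat \<Rightarrow> (nat \<Rightarrow> 'v qpoly) \<Rightarrow> (nat \<Rightarrow> nat) \<Rightarrow> 'v qpoly" where
  "psiT n X a = qconst (1 / of_nat (\<Prod>k=1..n. fact (a k))) * (\<Prod>k=1..n. X k ^ a k)"

lemma Psi_T: "Psi n X = (\<Sum>a\<in>psi_index n. psiT n X a)"
  by (simp add: Psi_def psiT_def)

lemma psi_index_alt:
  assumes "m \<le> N"
  shows "a \<in> psi_index m \<longleftrightarrow> (\<forall>k. a k \<noteq> 0 \<longrightarrow> k \<in> {1..N}) \<and> (\<Sum>k=1..N. k * a k) = m"
proof
  assume a: "a \<in> psi_index m"
  then have s: "\<forall>k. a k \<noteq> 0 \<longrightarrow> k \<in> {1..m}" and e: "(\<Sum>k=1..m. k * a k) = m"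
    by (auto simp: psi_index_def)
  have "(\<Sum>k=1..N. k * a k) = (\<Sum>k=1..m. k * a k)"
    by (rule sum.mono_neutral_right) (use s assms in auto)
  have "\<forall>k. a k \<noteq> 0 \<longrightarrow> k \<in> {1..N}"
  proof (intro allI impI)
    fix k assume "a k \<noteq> 0"
    with s have "k \<in> {1..m}" by blast
    with assms show "k \<in> {1..N}" by simp
  qed
  with e \<open>(\<Sum>k=1..N. k * a k) = (\<Sum>k=1..m. k * a k)\<close> show "(\<forall>k. a k \<noteq> 0 \<longrightarrow> k \<in> {1..N}) \<and> (\<Sum>k=1..N. k * a k) = m" by simp
next
  assume h: "(\<forall>k. a k \<noteq> 0 \<longrightarrow> k \<in> {1..N}) \<and> (\<Sum>k=1..N. k * a k) = m"
  have s: "a k \<noteq> 0 \<longrightarrow> k \<in> {1..m}" for k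
  proof
    assume ak: "a k \<noteq> 0"
    with h have k: "k \<in> {1..N}" by auto
    have "k \<le> k * a k" using ak by simp
    also have "\<dots> \<le> (\<Sum>k=1..N. k * a k)"
      by (rule member_le_sum) (use k in auto)
    finally show "k \<in> {1..m}" using h k by auto
  qed
  have z: "i > m \<Longrightarrow> a i = 0" for i using s[of i] by (cases "a i = 0") auto
  have "(\<Sum>k=1..N. k * a k) = (\<Sum>k=1..m. k * a k)"
    by (rule sum.mono_neutral_right) (use z assms in auto)
  with s h show "a \<in> psi_index m" by (auto simp: psi_index_def)
qed

lemma psi_index_bound: "a \<in> psi_index m \<Longrightarrow> a k \<le> m"
proof -
  assume a: "a \<in> psi_index m"
  show "a k \<le> m"
  proof (cases "a k = 0")
    case False
    with a have k: "k \<in> {1..m}" and e: "(\<Sum>k=1..m. k * a k) = m" by (auto simp: psi_index_def)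
    have "a k \<le> k * a k" using k by simp
    also have "\<dots> \<le> (\<Sum>k=1..m. k * a k)" by (rule member_le_sum) (use k in auto)
    finally show ?thesis using e by simp
  qed simp
qed

lemma psi_index_finite: "finite (psi_index m)"
proof -
  have "psi_index m \<subseteq> {f. \<forall>x. (x \<in> {1..m} \<longrightarrow> f x \<in> {0..m}) \<and> (x \<notin> {1..m} \<longrightarrow> f x = 0)}"
  proof
    fix a assume a: "a \<in> psi_index m"
    then have "\<forall>k. a k \<noteq> 0 \<longrightarrow> k \<in> {1..m}" by (simp add: psi_index_def)
    then have "\<forall>x. x \<notin> {1..m} \<longrightarrow> a x = 0" by blast
    moreover have "\<forall>x. a x \<in> {0..m}" using psi_index_bound[OF a] by simp
    ultimately show "a \<in> {f. \<forall>x. (x \<in> {1..m} \<longrightarrow> f x \<in> {0..m}) \<and> (x \<notin> {1..m} \<longrightarrow> f x = 0)}"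
      by blast
  qed
  moreover have "finite {f. \<forall>x. (x \<in> {1..m} \<longrightarrow> f x \<in> {0..m}) \<and> (x \<notin> {1..m} \<longrightarrow> f x = (0::nat))}"
    by (rule finite_set_of_finite_funs) auto
  ultimately show ?thesis by (rule finite_subset)
qed

lemma psiT_range:
  assumes "\<forall>k. a k \<noteq> 0 \<longrightarrow> k \<in> {1..m}" "m \<le> n"
  shows "psiT n X a = psiT m X a"
proof -
  have z: "i > m \<Longrightarrow> a i = 0" for i using assms(1)[rule_format, of i] by (cases "a i = 0") auto
  have h1: "(\<Prod>k=1..n. fact (a k)) = (\<Prod>k=1..m. fact (a k) :: nat)"
    by (rule prod.mono_neutral_right) (use assms z in auto)
  have h2: "(\<Prod>k=1..n. X k ^ a k) = (\<Prod>k=1..m. X k ^ a k)"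
    by (rule prod.mono_neutral_right) (use assms z in auto)
  show ?thesis unfolding psiT_def h1 h2 ..
qed

lemma Psi_cong: "(\<And>k. 1 \<le> k \<Longrightarrow> k \<le> n \<Longrightarrow> X k = Y k) \<Longrightarrow> Psi n X = Psi n Y"
  unfolding Psi_def by (intro sum.cong refl arg_cong2[where f="(*)"] prod.cong) auto

lemma Psi_0: "Psi 0 X = 1"
proof -
  have "psi_index 0 = {\<lambda>_. 0}" by (auto simp: psi_index_def)
  then show ?thesis by (simp add: Psi_def)
qed

lemma psiT_step:
  assumes k: "k \<in> {1..n}"
  shows "of_nat (Suc (b k)) * psiT n X (b(k := Suc (b k))) = X k * psiT n X b"
proof -
  let ?S = "{1..n} - {k}"
  have f1: "(\<Prod>j=1..n. fact ((b(k := Suc (b k))) j)) = fact (Suc (b k)) * (\<Prod>j\<in>?S. fact (b j))"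
    using k by (subst prod.remove[of _ k]) (auto intro!: prod.cong)
  have f2: "(\<Prod>j=1..n. fact (b j)) = fact (b k) * (\<Prod>j\<in>?S. fact (b j))"
    using k by (subst prod.remove[of _ k]) (auto intro!: prod.cong)
  have p1: "(\<Prod>j=1..n. X j ^ ((b(k := Suc (b k))) j)) = X k ^ Suc (b k) * (\<Prod>j\<in>?S. X j ^ b j)"
    using k by (subst prod.remove[of _ k]) (auto intro!: prod.cong)
  have p2: "(\<Prod>j=1..n. X j ^ b j) = X k ^ b k * (\<Prod>j\<in>?S. X j ^ b j)"
    using k by (subst prod.remove[of _ k]) (auto intro!: prod.cong)
  define R where "R = (\<Prod>j\<in>?S. fact (b j) :: nat)"
  define P where "P = (\<Prod>j\<in>?S. X j ^ b j)"
  have R: "R > 0" unfolding R_def by (simp add: prod_pos)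
  have q: "(of_nat (Suc (b k)) :: rat) * (1 / of_nat (fact (Suc (b k)) * R)) = 1 / of_nat (fact (b k) * R)"
  proof -
    have e: "(of_nat (fact (Suc (b k)) * R) :: rat) = of_nat (Suc (b k)) * of_nat (fact (b k) * R)"
      by (simp only: fact_Suc of_nat_mult mult.assoc of_nat_id)
    have c: "c \<noteq> 0 \<Longrightarrow> c * (1 / (c * F)) = 1 / F" for c F :: rat by simp
    show ?thesis unfolding e by (rule c) simp
  qed
  have "of_nat (Suc (b k)) * psiT n X (b(k := Suc (b k)))
      = qconst (of_nat (Suc (b k))) * (qconst (1 / of_nat (fact (Suc (b k)) * R)) * (X k ^ Suc (b k) * P))"
    unfolding psiT_def f1 p1 R_def[symmetric] P_def[symmetric] qconst_of_nat ..
  also have "\<dots> = qconst (of_nat (Suc (b k)) * (1 / of_nat (fact (Suc (b k)) * R))) * (X k * (X k ^ b k * P))"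
    by (simp only: qconst_mult power_Suc mult.assoc)
  also have "\<dots> = X k * (qconst (1 / of_nat (fact (b k) * R)) * (X k ^ b k * P))"
    unfolding q by (simp only: mult.left_commute)
  also have "\<dots> = X k * psiT n X b"
    unfolding psiT_def f2 p2 R_def[symmetric] P_def[symmetric] ..
  finally show ?thesis .
qed



lemma sum_upd_nat:
  assumes "finite A" "k \<in> A"
  shows "(\<Sum>j\<in>A. j * (f(k:=v)) j) + k * f k = (\<Sum>j\<in>A. j * f j) + k * (v::nat)"
proof -
  have r: "(\<Sum>j\<in>A-{k}. j * (f(k:=v)) j) = (\<Sum>j\<in>A-{k}. j * f j)"
    by (rule sum.cong) auto
  show ?thesis
    using assms by (simp add: sum.remove[OF assms] r)
qed

lemma psi_newton_k:
  assumes k: "k \<in> {1..n}"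
  shows "(\<Sum>a\<in>psi_index n. of_nat (a k) * psiT n X a) = X k * Psi (n - k) X"
proof -
  let ?S = "{a\<in>psi_index n. a k \<noteq> 0}"
  let ?i = "\<lambda>b::nat\<Rightarrow>nat. b(k := Suc (b k))"
  let ?j = "\<lambda>a::nat\<Rightarrow>nat. a(k := a k - 1)"
  have nk: "n - k \<le> n" by simp
  have "(\<Sum>a\<in>psi_index n. of_nat (a k) * psiT n X a) = (\<Sum>a\<in>?S. of_nat (a k) * psiT n X a)"
    by (rule sum.mono_neutral_right) (auto simp: psi_index_finite)
  also have "\<dots> = (\<Sum>b\<in>psi_index (n-k). of_nat (Suc (b k)) * psiT n X (?i b))"
  proof (rule sum.reindex_bij_witness[where i = ?i and j = ?j])
    fix a assume a: "a \<in> ?S"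
    then show "?i (?j a) = a" by auto
    from a have an: "a k \<noteq> 0" and aI: "a \<in> psi_index n" by auto
    from aI have s: "\<forall>x. a x \<noteq> 0 \<longrightarrow> x \<in> {1..n}" and e: "(\<Sum>x=1..n. x * a x) = n"
      using psi_index_alt[of n n a] by auto
    have "(\<Sum>x=1..n. x * (?j a) x) + k * a k = (\<Sum>x=1..n. x * a x) + k * (a k - 1)"
      using sum_upd_nat[of "{1..n}" k a "a k - 1"] k by simp
    then have "(\<Sum>x=1..n. x * (?j a) x) = n - k" using e an
      by (cases "a k") (auto simp: algebra_simps)
    moreover have "\<forall>x. (?j a) x \<noteq> 0 \<longrightarrow> x \<in> {1..n}" using s k by auto
    ultimately show "?j a \<in> psi_index (n-k)" using psi_index_alt[OF nk, of "?j a"] by blast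
    show "of_nat (Suc (?j a k)) * psiT n X (?i (?j a)) = of_nat (a k) * psiT n X a"
      using an by auto
  next
    fix b assume b: "b \<in> psi_index (n-k)"
    show "?j (?i b) = b" by auto
    from b have s: "\<forall>x. b x \<noteq> 0 \<longrightarrow> x \<in> {1..n}" and e: "(\<Sum>x=1..n. x * b x) = n - k"
      using psi_index_alt[OF nk, of b] by auto
    have "(\<Sum>x=1..n. x * (?i b) x) + k * b k = (\<Sum>x=1..n. x * b x) + k * Suc (b k)"
      using sum_upd_nat[of "{1..n}" k b "Suc (b k)"] k by simp
    then have "(\<Sum>x=1..n. x * (?i b) x) = n" using e k by (simp add: algebra_simps)
    moreover have "\<forall>x. (?i b) x \<noteq> 0 \<longrightarrow> x \<in> {1..n}" using s k by auto
    ultimately have "?i b \<in> psi_index n" using psi_index_alt[of n n "?i b"] by blast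
    then show "?i b \<in> ?S" by simp
  qed
  also have "\<dots> = (\<Sum>b\<in>psi_index (n-k). X k * psiT (n-k) X b)"
  proof (rule sum.cong[OF refl])
    fix b assume b: "b \<in> psi_index (n-k)"
    have "psiT n X b = psiT (n-k) X b"
      by (rule psiT_range) (use b in \<open>auto simp: psi_index_def\<close>)
    then show "of_nat (Suc (b k)) * psiT n X (?i b) = X k * psiT (n-k) X b"
      using psiT_step[OF k, of b X] by simp
  qed
  also have "\<dots> = X k * Psi (n - k) X"
    by (simp add: Psi_T sum_distrib_left)
  finally show ?thesis .
qed

lemma psi_newton:
  "of_nat n * Psi n X = (\<Sum>k=1..n. of_nat k * X k * Psi (n - k) X)"
proof -
  have "of_nat n * Psi n X = (\<Sum>a\<in>psi_index n. of_nat n * psiT n X a)"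
    by (simp add: Psi_T sum_distrib_left)
  also have "\<dots> = (\<Sum>a\<in>psi_index n. \<Sum>k=1..n. of_nat k * (of_nat (a k) * psiT n X a))"
  proof (rule sum.cong[OF refl])
    fix a assume "a \<in> psi_index n"
    then have e: "(\<Sum>k=1..n. k * a k) = n" by (simp add: psi_index_def)
    have "of_nat n * psiT n X a = of_nat (\<Sum>k=1..n. k * a k) * psiT n X a" by (simp only: e)
    also have "\<dots> = (\<Sum>k=1..n. of_nat k * (of_nat (a k) * psiT n X a))"
      by (simp add: of_nat_sum sum_distrib_right mult.assoc)
    finally show "of_nat n * psiT n X a = (\<Sum>k=1..n. of_nat k * (of_nat (a k) * psiT n X a))" .
  qed
  also have "\<dots> = (\<Sum>k=1..n. of_nat k * (\<Sum>a\<in>psi_index n. of_nat (a k) * psiT n X a))"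
    by (subst sum.swap) (simp add: sum_distrib_left)
  also have "\<dots> = (\<Sum>k=1..n. of_nat k * X k * Psi (n - k) X)"
    by (rule sum.cong[OF refl]) (simp add: psi_newton_k mult.assoc)
  finally show ?thesis .
qed

lemma psi_split:
  assumes n: "n \<ge> 1"
  shows "Psi n X = Psi n (X(n := 0)) + X n"
proof -
  define e where "e = (\<lambda>j::nat. if j = n then 1 else (0::nat))"
  let ?A = "psi_index n" and ?B = "{a. a n = (0::nat)}"
  have eA: "e \<in> ?A"
  proof -
    have "(\<Sum>j=1..n. j * e j) = (\<Sum>j=1..n. if j = n then n else 0)"
      by (rule sum.cong) (auto simp: e_def)
    also have "\<dots> = n" using n by simp
    finally show ?thesis using n by (auto simp: psi_index_def e_def)
  qed
  have AB: "?A - ?B = {e}"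
  proof
    show "{e} \<subseteq> ?A - ?B" using eA by (simp add: e_def)
    show "?A - ?B \<subseteq> {e}"
    proof
      fix a assume a: "a \<in> ?A - ?B"
      then have an: "a n \<noteq> 0" and s: "\<forall>k. a k \<noteq> 0 \<longrightarrow> k \<in> {1..n}" and
        sm: "(\<Sum>k=1..n. k * a k) = n" by (auto simp: psi_index_def)
      have nin: "n \<in> {1..n}" using n by simp
      have "(\<Sum>k=1..n. k * a k) = (\<Sum>k\<in>{1..n}-{n}. k * a k) + n * a n"
        using sum.remove[OF _ nin, of "\<lambda>k. k * a k"] by simp
      then have h: "(\<Sum>k\<in>{1..n}-{n}. k * a k) + n * a n = n" using sm by simp
      then have "n * a n \<le> n" by linarith
      then have a1: "a n = 1" using an n by (cases "a n") auto
      with h have "(\<Sum>k\<in>{1..n}-{n}. k * a k) = 0" by simp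
      then have z: "\<forall>k\<in>{1..n}-{n}. k * a k = 0" by simp
      show "a \<in> {e}"
      proof -
        have "a k = e k" for k
        proof (cases "k = n")
          case True then show ?thesis using a1 by (simp add: e_def)
        next
          case False
          show ?thesis
          proof (cases "k \<in> {1..n}")
            case True with False z have "k * a k = 0" by auto
            with True show ?thesis using False by (auto simp: e_def)
          next
            case False2: False
            with s show ?thesis using False by (auto simp: e_def)
          qed
        qed
        then show ?thesis by auto
      qed
    qed
  qed
  have Te: "psiT n Y e = Y n" for Y :: "nat \<Rightarrow> 'a qpoly"
  proof -
    have f: "(\<Prod>k=1..n. fact (e k)) = (1::nat)" by (rule prod.neutral) (auto simp: e_def)
    have "(\<Prod>k=1..n. Y k ^ e k) = (\<Prod>k=1..n. if k = n then Y k else 1)"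
      by (rule prod.cong) (auto simp: e_def)
    also have "\<dots> = Y n" using n by simp
    finally show ?thesis unfolding psiT_def f by simp
  qed
  have TB: "psiT n (X(n:=0)) a = psiT n X a" if "a \<in> ?A \<inter> ?B" for a
  proof -
    have "(\<Prod>k=1..n. (X(n:=0)) k ^ a k) = (\<Prod>k=1..n. X k ^ a k)"
      by (rule prod.cong) (use that in auto)
    then show ?thesis by (simp add: psiT_def)
  qed
  have "Psi n X = (\<Sum>a\<in>?A \<inter> ?B. psiT n X a) + (\<Sum>a\<in>?A - ?B. psiT n X a)"
    by (simp add: Psi_T sum.Int_Diff[OF psi_index_finite])
  moreover have "Psi n (X(n:=0)) = (\<Sum>a\<in>?A \<inter> ?B. psiT n (X(n:=0)) a) + (\<Sum>a\<in>?A - ?B. psiT n (X(n:=0)) a)"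
    by (simp add: Psi_T sum.Int_Diff[OF psi_index_finite])
  moreover have "(\<Sum>a\<in>?A \<inter> ?B. psiT n (X(n:=0)) a) = (\<Sum>a\<in>?A \<inter> ?B. psiT n X a)"
    by (rule sum.cong) (auto simp: TB)
  ultimately show ?thesis unfolding AB using Te[of X] Te[of "X(n:=0)"] by simp
qed



lemma qpoly_cancel_nat:
  fixes x y :: "'v qpoly"
  assumes "of_nat (Suc m) * x = of_nat (Suc m) * y"
  shows "x = y"
proof -
  have c: "qconst (1 / of_nat (Suc m)) * (of_nat (Suc m) :: 'v qpoly) = 1"
    unfolding qconst_of_nat[symmetric] qconst_mult[symmetric] by simp
  have "qconst (1 / of_nat (Suc m)) * (of_nat (Suc m) * x) = qconst (1 / of_nat (Suc m)) * (of_nat (Suc m) * y)"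
    using assms by simp
  then show ?thesis unfolding mult.assoc[symmetric] c by simp
qed

lemma Psi_zero: "n \<ge> 1 \<Longrightarrow> Psi n (\<lambda>_. 0 :: 'v qpoly) = 0"
proof -
  assume n: "n \<ge> 1"
  then obtain m where m: "n = Suc m" by (cases n) auto
  have "of_nat n * Psi n (\<lambda>_. 0 :: 'v qpoly) = of_nat n * 0"
    by (simp add: psi_newton)
  then show ?thesis unfolding m by (rule qpoly_cancel_nat)
qed

lemma length_Plist[simp]: "length (Plist n) = n"
  by (induction n) auto

lemma Plist_prefix: "i < n \<Longrightarrow> n \<le> m \<Longrightarrow> Plist m ! i = Plist n ! i"
proof (induction m)
  case 0 then show ?case by simp
next
  case (Suc m)
  show ?case
  proof (cases "n = Suc m")
    case False
    with Suc have "n \<le> m" by simp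
    with Suc have "Plist m ! i = Plist n ! i" by simp
    moreover have "i < length (Plist m)" using Suc \<open>n \<le> m\<close> by simp
    ultimately show ?thesis by (simp add: nth_append)
  qed simp
qed

lemma Plist_Pel: "1 \<le> k \<Longrightarrow> k \<le> n \<Longrightarrow> Plist n ! (k - 1) = Pel k"
  unfolding Pel_def by (rule Plist_prefix) auto

lemma Pel_Suc: "Pel (Suc n) = (if n = 0 then ladder 1
      else ladder (Suc n) - Psi (Suc n) (\<lambda>k. if 1 \<le> k \<and> k \<le> n then Pel k else 0))"
proof -
  have "Pel (Suc n) = (if n = 0 then ladder 1
      else ladder (Suc n) - Psi (Suc n) (\<lambda>k. if 1 \<le> k \<and> k \<le> n then Plist n ! (k - 1) else 0))"
    by (simp add: Pel_def nth_append)
  also have "(\<lambda>k. if 1 \<le> k \<and> k \<le> n then Plist n ! (k - 1) else 0) = (\<lambda>k. if 1 \<le> k \<and> k \<le> n then Pel k else 0)"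
    by (rule ext) (metis Plist_Pel)
  finally show ?thesis .
qed

definition Lad :: "nat \<Rightarrow> hladder" where
  "Lad j = (if j = 0 then 1 else ladder j)"

lemma Lad_Psi: "Lad m = Psi m Pel"
proof (cases m)
  case 0 then show ?thesis by (simp add: Lad_def Psi_0)
next
  case (Suc n)
  have sp: "Psi (Suc n) Pel = Psi (Suc n) (Pel(Suc n := 0)) + Pel (Suc n)"
    by (rule psi_split) simp
  show ?thesis
  proof (cases "n = 0")
    case True
    have "Psi (Suc n) (Pel(Suc n := 0)) = Psi (Suc n) (\<lambda>_. 0)"
      by (rule Psi_cong) (use True in auto)
    also have "\<dots> = 0" by (rule Psi_zero) simp
    finally show ?thesis using sp Suc True by (simp add: Lad_def Pel_Suc)
  next
    case False
    have "Psi (Suc n) (Pel(Suc n := 0)) = Psi (Suc n) (\<lambda>k. if 1 \<le> k \<and> k \<le> n then Pel k else 0)"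
      by (rule Psi_cong) auto
    then show ?thesis using sp Suc False by (simp add: Lad_def Pel_Suc)
  qed
qed

lemma Lad_newton: "of_nat n * Lad n = (\<Sum>k=1..n. of_nat k * Pel k * Lad (n - k))"
  unfolding Lad_Psi by (rule psi_newton)



definition fmap :: "('a qpoly \<Rightarrow> 'b qpoly) \<Rightarrow> 'a qpoly fps \<Rightarrow> 'b qpoly fps" where
  "fmap h f = Abs_fps (\<lambda>n. h (fps_nth f n))"

lemma fmap_nth[simp]: "fps_nth (fmap h f) n = h (fps_nth f n)"
  by (simp add: fmap_def)

lemma fmap_mult: "fmap (qeval g) (f1 * f2) = fmap (qeval g) f1 * fmap (qeval g) f2"
  by (simp add: fps_eq_iff fps_mult_nth qeval_sum qeval_mult)

lemma fmap_deriv: "fmap (qeval g) (fps_deriv f) = fps_deriv (fmap (qeval g) f)"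
  by (simp add: fps_eq_iff qeval_mult qeval_add)

lemma fmap_eq:
  assumes "fps_deriv L = fps_deriv U * L"
  shows "fps_deriv (fmap (qeval g) L) = fps_deriv (fmap (qeval g) U) * fmap (qeval g) L"
  using arg_cong[OF assms, of "fmap (qeval g)"] by (simp add: fmap_mult fmap_deriv)

lemma newton_fps:
  fixes a u :: "nat \<Rightarrow> 'a::comm_ring_1"
  assumes "\<And>n. of_nat n * a n = (\<Sum>k=1..n. of_nat k * u k * a (n - k))"
  shows "fps_deriv (Abs_fps a) = fps_deriv (Abs_fps u) * Abs_fps a"
proof (rule fps_ext)
  fix m
  have "fps_nth (fps_deriv (Abs_fps a)) m = of_nat (Suc m) * a (Suc m)" by simp
  also have "\<dots> = (\<Sum>k=Suc 0..Suc m. of_nat k * u k * a (Suc m - k))"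
    using assms[of "Suc m"] by simp
  also have "\<dots> = (\<Sum>i=0..m. of_nat (Suc i) * u (Suc i) * a (Suc m - Suc i))"
    by (rule sum.shift_bounds_cl_Suc_ivl)
  also have "\<dots> = fps_nth (fps_deriv (Abs_fps u) * Abs_fps a) m"
    by (simp add: fps_mult_nth)
  finally show "fps_nth (fps_deriv (Abs_fps a)) m = fps_nth (fps_deriv (Abs_fps u) * Abs_fps a) m" .
qed

lemma fps_zero_cancel:
  fixes h c :: "'a::comm_ring_1 fps"
  assumes "h * c = 0" "fps_nth c 0 = 1"
  shows "h = 0"
proof -
  have "fps_nth h n = 0" for n
  proof (induction n rule: less_induct)
    case (less n)
    show ?case
    proof (cases n)
      case 0
      have "fps_nth (h * c) 0 = fps_nth h 0" using assms(2) by (simp add: fps_mult_nth)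
      then show ?thesis using assms(1) 0 by simp
    next
      case (Suc m)
      have z: "(\<Sum>i=0..m. fps_nth h i * fps_nth c (n - i)) = 0"
        by (rule sum.neutral) (use less Suc in auto)
      have "fps_nth (h * c) n = (\<Sum>i=0..m. fps_nth h i * fps_nth c (n - i)) + fps_nth h n * fps_nth c 0"
        unfolding fps_mult_nth Suc by (simp add: sum.atLeast0_atMost_Suc)
      then have "fps_nth (h * c) n = fps_nth h n" using z assms(2) by simp
      then show ?thesis using assms(1) by simp
    qed
  qed
  then show ?thesis by (simp add: fps_eq_iff)
qed

lemma fps_mult_cancel:
  fixes f g c :: "'a::comm_ring_1 fps"
  assumes "f * c = g * c" "fps_nth c 0 = 1"
  shows "f = g"
proof -
  have "(f - g) * c = 0" using assms(1) by (simp add: algebra_simps)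
  then have "f - g = 0" using assms(2) by (rule fps_zero_cancel)
  then show ?thesis by simp
qed

lemma tl_Lad: "tensor_left (Lad i) = lt i"
  by (simp add: tensor_left_def Lad_def ladder_def lt_def)

lemma tr_Lad: "tensor_right (Lad i) = rt i"
  by (simp add: tensor_right_def Lad_def ladder_def rt_def)

lemma coprod_Lad: "coprod (Lad n) = (\<Sum>i=0..n. tensor_left (Lad i) * tensor_right (Lad (n - i)))"
proof (cases n)
  case 0 then show ?thesis by (simp add: coprod_def Lad_def tensor_left_def tensor_right_def)
next
  case (Suc m)
  have "coprod (Lad n) = delta_ladder (Suc m)"
    by (simp add: coprod_def Lad_def ladder_def Suc)
  also have "\<dots> = rt (Suc m) + lt (Suc m) + (\<Sum>j=1..m. lt j * rt (Suc m - j))"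
    by (simp add: delta_ladder_def)
  also have "\<dots> = (\<Sum>i=0..n. lt i * rt (n - i))"
    unfolding Suc sum.atLeast0_atMost_Suc
    by (simp add: sum.atLeast_Suc_atMost[of 0 m] lt_def rt_def)
  finally show ?thesis by (simp add: tl_Lad tr_Lad)
qed

lemma Pel_primitive: "i \<ge> 1 \<Longrightarrow> primitive (Pel i)"
proof -
  assume "i \<ge> 1"
  then obtain m where i: "i = Suc m" by (cases i) auto
  define LH where "LH = Abs_fps Lad"
  define UH where "UH = Abs_fps Pel"
  have eqH: "fps_deriv LH = fps_deriv UH * LH"
    unfolding LH_def UH_def by (rule newton_fps) (rule Lad_newton)
  note fm = fmap_mult[of "\<lambda>i. delta_ladder (Suc i)", folded coprod_def]
    fmap_mult[of "\<lambda>i. qvar (Inl i)", folded tensor_left_def]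
    fmap_mult[of "\<lambda>i. qvar (Inr i)", folded tensor_right_def]
  note fd = fmap_deriv[of "\<lambda>i. delta_ladder (Suc i)", folded coprod_def]
    fmap_deriv[of "\<lambda>i. qvar (Inl i)", folded tensor_left_def]
    fmap_deriv[of "\<lambda>i. qvar (Inr i)", folded tensor_right_def]
  define A where "A = fmap tensor_left LH"
  define B where "B = fmap tensor_right LH"
  define UL where "UL = fmap tensor_left UH"
  define UR where "UR = fmap tensor_right UH"
  define UC where "UC = fmap coprod UH"
  have eqC: "fps_deriv (fmap coprod LH) = fps_deriv UC * fmap coprod LH"
    unfolding UC_def coprod_def by (rule fmap_eq[OF eqH])
  have eqL: "fps_deriv A = fps_deriv UL * A"
    unfolding UL_def A_def tensor_left_def by (rule fmap_eq[OF eqH])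
  have eqR: "fps_deriv B = fps_deriv UR * B"
    unfolding UR_def B_def tensor_right_def by (rule fmap_eq[OF eqH])
  have CAB: "fmap coprod LH = A * B"
    by (simp add: fps_eq_iff fps_mult_nth A_def B_def LH_def coprod_Lad)
  have C0: "fps_nth (A * B) 0 = 1"
    by (simp add: A_def B_def LH_def Lad_def tensor_left_def tensor_right_def)
  have "fps_deriv (A * B) = (fps_deriv UL + fps_deriv UR) * (A * B)"
    by (simp add: eqL eqR algebra_simps)
  then have "fps_deriv UC * (A * B) = (fps_deriv UL + fps_deriv UR) * (A * B)"
    using eqC CAB by simp
  then have "fps_deriv UC = fps_deriv UL + fps_deriv UR"
    using C0 by (rule fps_mult_cancel)
  then have "fps_nth (fps_deriv UC) m = fps_nth (fps_deriv UL + fps_deriv UR) m" by simp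
  then have "of_nat (Suc m) * coprod (Pel (Suc m)) =
     of_nat (Suc m) * (tensor_left (Pel (Suc m)) + tensor_right (Pel (Suc m)))"
    by (simp add: UC_def UL_def UR_def UH_def algebra_simps)
  then show ?thesis unfolding i primitive_def by (rule qpoly_cancel_nat)
qed



lemma lookup_qconst_mult: "Poly_Mapping.lookup (qconst c * p) m = c * Poly_Mapping.lookup p m"
  by (simp add: qconst_def mult_map_scale_conv_mult[symmetric] map.rep_eq when_def)

lemma lookup_qsmult: "Poly_Mapping.lookup (qsmult c p) m = c * Poly_Mapping.lookup p m"
  by (simp add: qsmult_def lookup_qconst_mult)

lemma qconst_pow: "qconst a ^ k = qconst (a ^ k)"
  by (induction k) (auto simp: qconst_mult)

lemma qconst_prod: "(\<Prod>x\<in>S. qconst (g x)) = qconst (\<Prod>x\<in>S. g x)"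
  by (induction S rule: infinite_finite_induct) (auto simp: qconst_mult)

lemma lookup_qeval_diag:
  "Poly_Mapping.lookup (qeval (\<lambda>i. qconst (w i) * qvar i) p) \<mu> =
     (\<Prod>i\<in>Poly_Mapping.keys \<mu>. w i ^ Poly_Mapping.lookup \<mu> i) * Poly_Mapping.lookup p \<mu>"
proof -
  define W where "W m = (\<Prod>i\<in>Poly_Mapping.keys m. w i ^ Poly_Mapping.lookup m i)" for m
  have mon: "mon (\<lambda>i. qconst (w i) * qvar i) m = qconst (W m) * Poly_Mapping.single m 1" for m
    by (simp add: mon_def power_mult_distrib prod.distrib qconst_pow qconst_prod W_def
        mon_qvar[unfolded mon_def])
  have "qeval (\<lambda>i. qconst (w i) * qvar i) p =
      (\<Sum>m\<in>Poly_Mapping.keys p. Poly_Mapping.single m (Poly_Mapping.lookup p m * W m))"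
    unfolding qeval_alt mon by (simp add: qconst_def mult_single mult.assoc[symmetric])
  then have "Poly_Mapping.lookup (qeval (\<lambda>i. qconst (w i) * qvar i) p) \<mu> =
      (\<Sum>m\<in>Poly_Mapping.keys p. (Poly_Mapping.lookup p m * W m when m = \<mu>))"
    by (simp add: lookup_sum lookup_single)
  also have "\<dots> = W \<mu> * Poly_Mapping.lookup p \<mu>"
    by (cases "\<mu> \<in> Poly_Mapping.keys p") (auto simp: when_def in_keys_iff)
  finally show ?thesis by (simp add: W_def)
qed

definition uses :: "hladder \<Rightarrow> nat \<Rightarrow> bool" where
  "uses p V \<longleftrightarrow> (\<forall>m\<in>Poly_Mapping.keys p. \<forall>x\<in>Poly_Mapping.keys m. x < V)"

lemma uses_add: "uses p V \<Longrightarrow> uses q V \<Longrightarrow> uses (p + q) V"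
proof -
  assume p: "uses p V" and q: "uses q V"
  show "uses (p + q) V" unfolding uses_def
  proof (intro ballI)
    fix m x assume m: "m \<in> Poly_Mapping.keys (p + q)" and x: "x \<in> Poly_Mapping.keys m"
    from m keys_add[of p q] have "m \<in> Poly_Mapping.keys p \<or> m \<in> Poly_Mapping.keys q" by auto
    then show "x < V"
    proof
      assume "m \<in> Poly_Mapping.keys p" then show "x < V" using p x unfolding uses_def by simp
    next
      assume "m \<in> Poly_Mapping.keys q" then show "x < V" using q x unfolding uses_def by simp
    qed
  qed
qed

lemma uses_uminus: "uses p V \<Longrightarrow> uses (- p) V"
  unfolding uses_def by simp

lemma uses_diff: "uses p V \<Longrightarrow> uses q V \<Longrightarrow> uses (p - q) V"
  using uses_add[of p V "-q"] uses_uminus by simp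

lemma keys_add_nat: "Poly_Mapping.keys (a + b) = Poly_Mapping.keys a \<union> Poly_Mapping.keys (b :: nat \<Rightarrow>\<^sub>0 nat)"
  by (auto simp: in_keys_iff lookup_add)

lemma uses_mult: "uses p V \<Longrightarrow> uses q V \<Longrightarrow> uses (p * q) V"
  unfolding uses_def
proof (intro ballI)
  fix m x
  assume p: "\<forall>m\<in>Poly_Mapping.keys p. \<forall>x\<in>Poly_Mapping.keys m. x < V"
    and q: "\<forall>m\<in>Poly_Mapping.keys q. \<forall>x\<in>Poly_Mapping.keys m. x < V"
    and m: "m \<in> Poly_Mapping.keys (p * q)" and x: "x \<in> Poly_Mapping.keys m"
  have "m \<in> {a + b | a b. a \<in> Poly_Mapping.keys p \<and> b \<in> Poly_Mapping.keys q}"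
    using keys_mult[of p q] m by (rule subsetD)
  then obtain a b where ab: "m = a + b" "a \<in> Poly_Mapping.keys p" "b \<in> Poly_Mapping.keys q"
    by blast
  from x have "x \<in> Poly_Mapping.keys a \<or> x \<in> Poly_Mapping.keys b" unfolding ab(1) keys_add_nat by simp
  then show "x < V" using ab p q by auto
qed

lemma uses_qconst: "uses (qconst c) V"
  unfolding uses_def qconst_def by simp

lemma uses_one: "uses 1 V"
  using uses_qconst[of 1 V] by simp

lemma uses_zero: "uses 0 V"
  using uses_qconst[of 0 V] by simp

lemma uses_qvar: "x < V \<Longrightarrow> uses (qvar x) V"
  unfolding uses_def qvar_def by simp

lemma uses_mono: "uses p V \<Longrightarrow> V \<le> W \<Longrightarrow> uses p W"
  unfolding uses_def using less_le_trans by blast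

lemma uses_sum: "(\<And>i. i \<in> I \<Longrightarrow> uses (g i) V) \<Longrightarrow> uses (\<Sum>i\<in>I. g i) V"
  by (induction I rule: infinite_finite_induct) (auto simp: uses_zero uses_add)

lemma uses_prod: "(\<And>i. i \<in> I \<Longrightarrow> uses (g i) V) \<Longrightarrow> uses (\<Prod>i\<in>I. g i) V"
  by (induction I rule: infinite_finite_induct) (auto simp: uses_one uses_mult)

lemma uses_pow: "uses p V \<Longrightarrow> uses (p ^ k) V"
  by (induction k) (auto simp: uses_one uses_mult)

lemma uses_Psi: "(\<And>k. 1 \<le> k \<Longrightarrow> k \<le> n \<Longrightarrow> uses (X k) V) \<Longrightarrow> uses (Psi n X) V"
  unfolding Psi_def
  by (intro uses_sum uses_mult uses_qconst uses_prod uses_pow) auto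

lemma uses_lookup: "uses p V \<Longrightarrow> V \<le> x \<Longrightarrow> Poly_Mapping.lookup p (Poly_Mapping.single x 1) = 0"
proof (rule ccontr)
  assume u: "uses p V" and x: "V \<le> x" and ne: "Poly_Mapping.lookup p (Poly_Mapping.single x 1) \<noteq> 0"
  then have "Poly_Mapping.single x 1 \<in> Poly_Mapping.keys p" by (simp add: in_keys_iff)
  moreover have "x \<in> Poly_Mapping.keys (Poly_Mapping.single x (1::nat))" by simp
  ultimately have "x < V" using u unfolding uses_def by blast
  with x show False by simp
qed

lemma Pel_uses: "k \<ge> 1 \<Longrightarrow> uses (Pel k) k"
proof (induction k rule: less_induct)
  case (less k)
  then obtain n where k: "k = Suc n" by (cases k) auto
  show ?case
  proof (cases "n = 0")
    case True then show ?thesis by (simp add: k Pel_Suc ladder_def uses_qvar)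
  next
    case False
    have h: "uses (Pel j) n" if "1 \<le> j" "j \<le> n" for j
    proof -
      have "uses (Pel j) j" using that by (intro less.IH) (auto simp: k)
      then show ?thesis by (rule uses_mono) (use that in simp)
    qed
    have "uses (Psi (Suc n) (\<lambda>k. if 1 \<le> k \<and> k \<le> n then Pel k else 0)) n"
      by (rule uses_Psi) (auto simp: h uses_zero)
    then have "uses (Psi (Suc n) (\<lambda>k. if 1 \<le> k \<and> k \<le> n then Pel k else 0)) (Suc n)"
      by (rule uses_mono) simp
    then show ?thesis using False
      by (simp add: k Pel_Suc ladder_def uses_diff uses_qvar)
  qed
qed

lemma Pel_lead: "k \<ge> 1 \<Longrightarrow> Poly_Mapping.lookup (Pel k) (Poly_Mapping.single (k - 1) 1) = 1"
proof -
  assume "k \<ge> 1"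
  then obtain n where k: "k = Suc n" by (cases k) auto
  show ?thesis
  proof (cases "n = 0")
    case True then show ?thesis by (simp add: k Pel_Suc ladder_def qvar_def)
  next
    case False
    have h: "uses (Pel j) n" if "1 \<le> j" "j \<le> n" for j
    proof -
      have "uses (Pel j) j" using that by (intro Pel_uses) auto
      then show ?thesis by (rule uses_mono) (use that in simp)
    qed
    have "uses (Psi (Suc n) (\<lambda>k. if 1 \<le> k \<and> k \<le> n then Pel k else 0)) n"
      by (rule uses_Psi) (auto simp: h uses_zero)
    then have "Poly_Mapping.lookup (Psi (Suc n) (\<lambda>k. if 1 \<le> k \<and> k \<le> n then Pel k else 0)) (Poly_Mapping.single n 1) = 0"
      by (rule uses_lookup) simp
    then show ?thesis using False
      by (simp add: k Pel_Suc ladder_def qvar_def lookup_minus)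
  qed
qed

lemma lin_indep: "(\<Sum>i=1..n. qsmult (c i) (Pel i)) = 0 \<Longrightarrow> \<forall>i\<in>{1..n}. c i = 0"
proof (induction n)
  case 0 then show ?case by simp
next
  case (Suc n)
  have "Poly_Mapping.lookup (\<Sum>i=1..Suc n. qsmult (c i) (Pel i)) (Poly_Mapping.single n 1) = 0"
    using Suc.prems by simp
  moreover have "Poly_Mapping.lookup (\<Sum>i=1..Suc n. qsmult (c i) (Pel i)) (Poly_Mapping.single n 1) = c (Suc n)"
  proof -
    have "(\<Sum>i=1..n. c i * Poly_Mapping.lookup (Pel i) (Poly_Mapping.single n 1)) = 0"
    proof (rule sum.neutral, rule ballI)
      fix i assume i: "i \<in> {1..n}"
      then have "uses (Pel i) i" by (intro Pel_uses) auto
      then have "Poly_Mapping.lookup (Pel i) (Poly_Mapping.single n 1) = 0"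
        by (rule uses_lookup) (use i in auto)
      then show "c i * Poly_Mapping.lookup (Pel i) (Poly_Mapping.single n 1) = 0" by simp
    qed
    moreover have "Poly_Mapping.lookup (Pel (Suc n)) (Poly_Mapping.single n 1) = 1"
      using Pel_lead[of "Suc n"] by simp
    ultimately show ?thesis
    proof -
      assume h1: "(\<Sum>i=1..n. c i * Poly_Mapping.lookup (Pel i) (Poly_Mapping.single n 1)) = 0"
        and h2: "Poly_Mapping.lookup (Pel (Suc n)) (Poly_Mapping.single n 1) = 1"
      have "(\<Sum>i=1..Suc n. qsmult (c i) (Pel i)) = (\<Sum>i=1..n. qsmult (c i) (Pel i)) + qsmult (c (Suc n)) (Pel (Suc n))"
        by simp
      then have "Poly_Mapping.lookup (\<Sum>i=1..Suc n. qsmult (c i) (Pel i)) (Poly_Mapping.single n 1)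
         = Poly_Mapping.lookup (\<Sum>i=1..n. qsmult (c i) (Pel i)) (Poly_Mapping.single n 1) + 
           Poly_Mapping.lookup (qsmult (c (Suc n)) (Pel (Suc n))) (Poly_Mapping.single n 1)"
        by (simp only: Poly_Mapping.lookup_add)
      also have "\<dots> = (\<Sum>i=1..n. c i * Poly_Mapping.lookup (Pel i) (Poly_Mapping.single n 1)) + c (Suc n) * 1"
        by (simp only: lookup_sum lookup_qsmult h2)
      finally show ?thesis using h1 by simp
    qed
  qed
  ultimately have cn: "c (Suc n) = 0" by simp
  then have "(\<Sum>i=1..n. qsmult (c i) (Pel i)) = 0"
    using Suc.prems by (simp add: qsmult_def)
  then have "\<forall>i\<in>{1..n}. c i = 0" by (rule Suc.IH)
  with cn show ?case by (auto simp: le_Suc_eq)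
qed



lemma primitive_diff: "primitive p \<Longrightarrow> primitive q \<Longrightarrow> primitive (p - q)"
  unfolding primitive_def coprod_def tensor_left_def tensor_right_def
  by (simp add: qeval_diff algebra_simps)

lemma primitive_qsmult: "primitive p \<Longrightarrow> primitive (qsmult c p)"
  unfolding primitive_def coprod_def tensor_left_def tensor_right_def
  by (simp add: qsmult_def qeval_mult distrib_left)

lemma qeval_delta:
  "qeval r (delta_ladder (Suc i)) = r (Inr i) + r (Inl i) + (\<Sum>j=1..i. r (Inl (j - 1)) * r (Inr (i - j)))"
proof -
  have "qeval r (\<Sum>j=1..i. lt j * rt (Suc i - j)) = (\<Sum>j=1..i. r (Inl (j - 1)) * r (Inr (i - j)))"
    unfolding qeval_sum
  proof (rule sum.cong[OF refl])
    fix j assume "j \<in> {1..i}"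
    then show "qeval r (lt j * rt (Suc i - j)) = r (Inl (j - 1)) * r (Inr (i - j))"
      by (simp add: lt_def rt_def qeval_mult Suc_diff_le)
  qed
  then show ?thesis
    by (simp add: delta_ladder_def qeval_add lt_def rt_def)
qed

lemma qeval_tl: "qeval r (tensor_left z) = qeval (\<lambda>i. r (Inl i)) z"
  unfolding tensor_left_def qeval_comp by simp

lemma qeval_tr: "qeval r (tensor_right z) = qeval (\<lambda>i. r (Inr i)) z"
  unfolding tensor_right_def qeval_comp by simp

lemma qeval_coprod: "qeval r (coprod z) = qeval (\<lambda>i. qeval r (delta_ladder (Suc i))) z"
  unfolding coprod_def qeval_comp by simp

lemma uses_cong:
  assumes "uses z V" "\<And>i. i < V \<Longrightarrow> f i = g i"
  shows "qeval f z = qeval g z"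
  by (rule qeval_cong) (use assms in \<open>auto simp: uses_def\<close>)

lemma step1:
  assumes prim: "primitive z" and u: "uses z (Suc v)"
  shows "z = qeval (\<lambda>i. qconst (if i = v then 0 else 1) * qvar i) z
           + qeval (\<lambda>i. qconst (if i = v then 1 else 0) * qvar i) z"
proof -
  define r :: "nat + nat \<Rightarrow> hladder" where
    "r = (\<lambda>s. case s of Inl i \<Rightarrow> (if i = v then 0 else qvar i) | Inr i \<Rightarrow> (if i = v then qvar v else 0))"
  have "qeval r (coprod z) = qeval qvar z"
  proof (unfold qeval_coprod, rule uses_cong[OF u])
    fix i assume i: "i < Suc v"
    have "(\<Sum>j=1..i. r (Inl (j - 1)) * r (Inr (i - j))) = 0"
      by (rule sum.neutral) (use i in \<open>auto simp: r_def\<close>)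
    then show "qeval r (delta_ladder (Suc i)) = qvar i"
      by (simp add: qeval_delta r_def)
  qed
  then have c: "qeval r (coprod z) = z" by (simp add: qeval_id)
  have l: "qeval r (tensor_left z) = qeval (\<lambda>i. qconst (if i = v then 0 else 1) * qvar i) z"
    unfolding qeval_tl by (rule arg_cong[where f="\<lambda>f. qeval f z"]) (auto simp: r_def)
  have rr: "qeval r (tensor_right z) = qeval (\<lambda>i. qconst (if i = v then 1 else 0) * qvar i) z"
    unfolding qeval_tr by (rule arg_cong[where f="\<lambda>f. qeval f z"]) (auto simp: r_def)
  from prim have "qeval r (coprod z) = qeval r (tensor_left z) + qeval r (tensor_right z)"
    by (simp add: primitive_def qeval_add)
  then show ?thesis using c l rr by simp
qed

lemma step2:
  assumes prim: "primitive z" and u: "uses z (Suc v)"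
  shows "qeval (\<lambda>i. qconst (if i = v then 2 else 0) * qvar i) z
       = qeval (\<lambda>i. qconst (if i = v then 1 else 0) * qvar i) z
           + qeval (\<lambda>i. qconst (if i = v then 1 else 0) * qvar i) z"
proof -
  define r :: "nat + nat \<Rightarrow> hladder" where
    "r = (\<lambda>s. case s of Inl i \<Rightarrow> (if i = v then qvar v else 0) | Inr i \<Rightarrow> (if i = v then qvar v else 0))"
  have "qeval r (coprod z) = qeval (\<lambda>i. qconst (if i = v then 2 else 0) * qvar i) z"
  proof (unfold qeval_coprod, rule uses_cong[OF u])
    fix i assume i: "i < Suc v"
    have "(\<Sum>j=1..i. r (Inl (j - 1)) * r (Inr (i - j))) = 0"
      by (rule sum.neutral) (use i in \<open>auto simp: r_def\<close>)
    moreover have "qconst 2 * qvar v = qvar v + (qvar v :: hladder)"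
      by (simp add: qconst_add[of 1 1, simplified] algebra_simps)
    ultimately show "qeval r (delta_ladder (Suc i)) = qconst (if i = v then 2 else 0) * qvar i"
      by (simp add: qeval_delta r_def)
  qed
  moreover have "qeval r (tensor_left z) = qeval (\<lambda>i. qconst (if i = v then 1 else 0) * qvar i) z"
    unfolding qeval_tl by (rule arg_cong[where f="\<lambda>f. qeval f z"]) (auto simp: r_def)
  moreover have "qeval r (tensor_right z) = qeval (\<lambda>i. qconst (if i = v then 1 else 0) * qvar i) z"
    unfolding qeval_tr by (rule arg_cong[where f="\<lambda>f. qeval f z"]) (auto simp: r_def)
  moreover from prim have "qeval r (coprod z) = qeval r (tensor_left z) + qeval r (tensor_right z)"
    by (simp add: primitive_def qeval_add)
  ultimately show ?thesis by simp
qed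



lemma qconst_sum: "(\<Sum>x\<in>S. qconst (g x)) = qconst (\<Sum>x\<in>S. g x)"
  by (induction S rule: infinite_finite_induct) (auto simp: qconst_add)

lemma key_lemma:
  assumes prim: "primitive z" and u: "uses z (Suc v)"
    and l: "Poly_Mapping.lookup z (Poly_Mapping.single v 1) = 0"
  shows "uses z v"
proof -
  have noV: "v \<notin> Poly_Mapping.keys \<mu>" if \<mu>: "\<mu> \<in> Poly_Mapping.keys z" for \<mu>
  proof
    assume vm: "v \<in> Poly_Mapping.keys \<mu>"
    define c where "c = Poly_Mapping.lookup z \<mu>"
    have c: "c \<noteq> 0" using \<mu> by (simp add: in_keys_iff c_def)
    have kv: "Poly_Mapping.lookup \<mu> v \<noteq> 0" using vm by (simp add: in_keys_iff)
    show False
    proof (cases "\<exists>w\<in>Poly_Mapping.keys \<mu>. w \<noteq> v")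
      case True
      then obtain w where w: "w \<in> Poly_Mapping.keys \<mu>" "w \<noteq> v" by blast
      have kw: "Poly_Mapping.lookup \<mu> w \<noteq> 0" using w by (simp add: in_keys_iff)
      have "c = Poly_Mapping.lookup (qeval (\<lambda>i. qconst (if i = v then 0 else 1) * qvar i) z
           + qeval (\<lambda>i. qconst (if i = v then 1 else 0) * qvar i) z) \<mu>"
        unfolding c_def using step1[OF prim u] by simp
      also have "\<dots> = (\<Prod>i\<in>Poly_Mapping.keys \<mu>. (if i = v then 0 else 1) ^ Poly_Mapping.lookup \<mu> i) * c
          + (\<Prod>i\<in>Poly_Mapping.keys \<mu>. (if i = v then 1 else 0) ^ Poly_Mapping.lookup \<mu> i) * c"
        unfolding Poly_Mapping.lookup_add lookup_qeval_diag c_def ..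
      also have "\<dots> = 0"
      proof -
        have p1: "(\<Prod>i\<in>Poly_Mapping.keys \<mu>. (if i = v then 0 else 1) ^ Poly_Mapping.lookup \<mu> i :: rat) = 0"
          using vm kv by (auto simp: prod_zero_iff)
        have p2: "(\<Prod>i\<in>Poly_Mapping.keys \<mu>. (if i = v then 1 else 0) ^ Poly_Mapping.lookup \<mu> i :: rat) = 0"
          using w kw by (auto simp: prod_zero_iff intro!: bexI[of _ w])
        show ?thesis unfolding p1 p2 by simp
      qed
      finally show False using c by simp
    next
      case False
      have K: "Poly_Mapping.keys \<mu> = {v}"
      proof
        show "Poly_Mapping.keys \<mu> \<subseteq> {v}" using False by blast
        show "{v} \<subseteq> Poly_Mapping.keys \<mu>" using vm by simp
      qed
      define k where "k = Poly_Mapping.lookup \<mu> v"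
      have "Poly_Mapping.lookup (qeval (\<lambda>i. qconst (if i = v then 2 else 0) * qvar i) z) \<mu>
       = Poly_Mapping.lookup (qeval (\<lambda>i. qconst (if i = v then 1 else 0) * qvar i) z
           + qeval (\<lambda>i. qconst (if i = v then 1 else 0) * qvar i) z) \<mu>"
        by (rule arg_cong[where f="\<lambda>p. Poly_Mapping.lookup p \<mu>", OF step2[OF prim u]])
      then have "(2::rat) ^ k * c = c + c"
        unfolding Poly_Mapping.lookup_add lookup_qeval_diag K by (simp add: c_def k_def)
      then have "(2::rat) ^ k * c = 2 ^ 1 * c" by simp
      then have "(2::rat) ^ k = 2 ^ 1" using c by simp
      then have k1: "k = 1" by (subst (asm) power_inject_exp) simp_all
      have "\<mu> = Poly_Mapping.single v 1"
      proof (rule poly_mapping_eqI)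
        fix x show "Poly_Mapping.lookup \<mu> x = Poly_Mapping.lookup (Poly_Mapping.single v 1) x"
        proof (cases "x = v")
          case True then show ?thesis using k1 by (simp add: k_def)
        next
          case False
          then have "x \<notin> Poly_Mapping.keys \<mu>" using K by simp
          then show ?thesis using False by (simp add: in_keys_iff lookup_single)
        qed
      qed
      then show False using l c by (simp add: c_def)
    qed
  qed
  show ?thesis unfolding uses_def
  proof (intro ballI)
    fix \<mu> x assume \<mu>: "\<mu> \<in> Poly_Mapping.keys z" and x: "x \<in> Poly_Mapping.keys \<mu>"
    from u \<mu> x have "x < Suc v" unfolding uses_def by blast
    moreover from noV[OF \<mu>] x have "x \<noteq> v" by auto
    ultimately show "x < v" by simp
  qed
qed

lemma span_V: "primitive z \<Longrightarrow> uses z V \<Longrightarrow> \<exists>c. z = (\<Sum>i=1..V. qsmult (c i) (Pel i))"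
proof (induction V arbitrary: z)
  case 0
  define K where "K = (\<Sum>m\<in>Poly_Mapping.keys z. Poly_Mapping.lookup z m)"
  have ev: "qeval f z = qconst K" for f :: "nat \<Rightarrow> 'w qpoly"
  proof -
    have "qeval f z = qeval (\<lambda>_. 1) z"
      by (rule uses_cong[OF "0.prems"(2)]) simp
    also have "\<dots> = (\<Sum>m\<in>Poly_Mapping.keys z. qconst (Poly_Mapping.lookup z m))"
      by (simp add: qeval_alt mon_def)
    also have "\<dots> = qconst K" unfolding K_def by (rule qconst_sum)
    finally show ?thesis .
  qed
  have "coprod z = tensor_left z + tensor_right z" using "0.prems"(1) by (simp add: primitive_def)
  then have "qconst K = (qconst K + qconst K :: hladder2)"
    unfolding coprod_def tensor_left_def tensor_right_def ev .
  then have "(qconst K :: hladder2) = 0" by simp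
  then have "Poly_Mapping.lookup (qconst K :: hladder2) 0 = 0" by simp
  then have "K = 0" unfolding qconst_def by simp
  then have "z = 0" using ev[of qvar] qeval_id[of z] by simp
  then show ?case by simp
next
  case (Suc V)
  define a where "a = Poly_Mapping.lookup z (Poly_Mapping.single V 1)"
  define y where "y = z - qsmult a (Pel (Suc V))"
  have py: "primitive y" unfolding y_def
    by (intro primitive_diff primitive_qsmult Suc.prems Pel_primitive) simp
  have "uses (qsmult a (Pel (Suc V))) (Suc V)"
    unfolding qsmult_def by (intro uses_mult uses_qconst Pel_uses) simp
  then have uy: "uses y (Suc V)" unfolding y_def by (intro uses_diff Suc.prems)
  have "Poly_Mapping.lookup y (Poly_Mapping.single V 1) = a - a * 1"
    unfolding y_def Poly_Mapping.lookup_minus lookup_qsmult a_def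
    using Pel_lead[of "Suc V"] by simp
  then have ly: "Poly_Mapping.lookup y (Poly_Mapping.single V 1) = 0" by simp
  have "uses y V" by (rule key_lemma[OF py uy ly])
  then obtain c where c: "y = (\<Sum>i=1..V. qsmult (c i) (Pel i))" using Suc.IH py by blast
  define c' where "c' = c(Suc V := a)"
  have "(\<Sum>i=1..Suc V. qsmult (c' i) (Pel i)) = (\<Sum>i=1..V. qsmult (c' i) (Pel i)) + qsmult a (Pel (Suc V))"
    by (simp add: c'_def)
  also have "(\<Sum>i=1..V. qsmult (c' i) (Pel i)) = y"
    unfolding c by (rule sum.cong) (auto simp: c'_def)
  finally have "z = (\<Sum>i=1..Suc V. qsmult (c' i) (Pel i))" by (simp add: y_def)
  then show ?case by blast
qed

lemma uses_exists: "\<exists>V. uses z V"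
proof -
  have "finite (\<Union>m\<in>Poly_Mapping.keys z. Poly_Mapping.keys m)" by simp
  then obtain V where "\<forall>x\<in>(\<Union>m\<in>Poly_Mapping.keys z. Poly_Mapping.keys m). x < V"
    using finite_nat_set_iff_bounded by blast
  then have "uses z V" unfolding uses_def by blast
  then show ?thesis by blast
qed

theorem theorem9p5:
  shows "(\<forall>i\<ge>1. primitive (Pel i))
    \<and> (\<forall>(n::nat) (c::nat \<Rightarrow> rat). (\<Sum>i=1..n. qsmult (c i) (Pel i)) = 0 \<longrightarrow> (\<forall>i\<in>{1..n}. c i = 0))
    \<and> (\<forall>x. primitive x \<longrightarrow> (\<exists>(n::nat) (c::nat \<Rightarrow> rat). x = (\<Sum>i=1..n. qsmult (c i) (Pel i))))"
proof (intro conjI allI impI)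
  fix i :: nat assume "i \<ge> 1" then show "primitive (Pel i)" by (rule Pel_primitive)
next
  fix n and c :: "nat \<Rightarrow> rat"
  assume "(\<Sum>i=1..n. qsmult (c i) (Pel i)) = 0"
  then show "\<forall>i\<in>{1..n}. c i = 0" by (rule lin_indep)
next
  fix x assume px: "primitive x"
  obtain V where "uses x V" using uses_exists by blast
  then show "\<exists>n c. x = (\<Sum>i=1..n. qsmult (c i) (Pel i))" using span_V[OF px] by blast
qed

end
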